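(* Let $p$ be a prime and $C\subseteq\mathbb{F}_p^{2n}$ a symplectic self-dual code, i.e. $C=C^{\perp_s}$. Let $J\subsetneq\{1,\dots,n\}$ be nonempty and $\overline J=\{1,\dots,n\}\setminus J$. Then for each (unit) $|\varphi\rangle\in Q(C)$, the partial trace $\mathrm{tr}_{\overline J}[|\varphi\rangle\langle\varphi|]$ is a completely mixed state on $Q(\sigma_J(C))$.
   Context: Vectors of $\mathbb{F}_p^{2n}$ are written $(\mathbf a|\mathbf b)$, coordinate pairs $(a_j,b_j)$ indexed by $j\in\{1,\dots,n\}$; symplectic form $(\mathbf a|\mathbf b)\cdot_s(\mathbf c|\mathbf d)=\mathbf a\cdot\mathbf d-\mathbf b\cdot\mathbf c$, dual $C^{\perp_s}$. For $R\subseteq\{1,\dots,n\}$: $\pi_R(\mathbf a|\mathbf b)=(a_j|b_j)_{j\in R}$ and $\sigma_R(D)=\{\pi_R(\mathbf y):\mathbf y=(\mathbf a|\mathbf b)\in D,\ \mathrm{supp}(\mathbf a)\cup\mathrm{supp}(\mathbf b)\subseteq R\}$. Let $\xi=e^{2\pi\iota/p}$, $X(a)|x\rangle=|x+a\rangle$, $Z(b)|x\rangle=\xi^{bx}|x\rangle$ on $\mathbb C^p$, $E_{(\mathbf a,\mathbf b)}=\bigotimes_jX(a_j)Z(b_j)$. For a symplectic self-orthogonal $D\subseteq\mathbb F_p^{2m}$, $Q(D)\subseteq\mathbb C^{p^m}$ is the common eigenspace $\{v:Ev=\lambda(E)v\ \forall E\in S\}$, $S$ generated by the scalars $\xi^\ell\mathcal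 I$ and the $E_{\mathbf y}$, $\mathbf y\in D$, with $\lambda$ a character, $\lambda(\xi\mathcal I)=\xi$. The character for $Q(\sigma_J(C))$ is chosen compatibly: for $\mathbf z\in\sigma_J(C)$ and $\mathbf y\in C$ with $\pi_J(\mathbf y)=\mathbf z$ and zero outside $J$, $\lambda(E_{\mathbf z})=\lambda(E_{\mathbf y})$. A completely mixed state on a subspace $V$ is the equal probabilistic mixture of the states of an orthonormal basis of $V$, i.e. $P_V/\dim V$ with $P_V$ the orthogonal projector onto $V$. *)

theory Defs
  imports Complex_Main "HOL-Computational_Algebra.Primes"
begin

type_synonym fpvec = "(nat \<Rightarrow> int) \<times> (nat \<Rightarrow> int)"
type_synonym basis_idx = "nat \<Rightarrow> int"
type_synonym qvec = "basis_idx \<Rightarrow> complex"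
type_synonym kern = "basis_idx \<Rightarrow> basis_idx \<Rightarrow> complex"

definition fp_vecs :: "nat \<Rightarrow> nat set \<Rightarrow> fpvec set" where
  "fp_vecs p R = {(a,b). \<forall>j. (j \<in> R \<longrightarrow> 0 \<le> a j \<and> a j < int p \<and> 0 \<le> b j \<and> b j < int p)
                           \<and> (j \<notin> R \<longrightarrow> a j = 0 \<and> b j = 0)}"

definition vadd :: "nat \<Rightarrow> fpvec \<Rightarrow> fpvec \<Rightarrow> fpvec" where
  "vadd p y y' = ((\<lambda>j. (fst y j + fst y' j) mod int p), (\<lambda>j. (snd y j + snd y' j) mod int p))"

definition vsmult :: "nat \<Rightarrow> int \<Rightarrow> fpvec \<Rightarrow> fpvec" where
  "vsmult p c y = ((\<lambda>j. (c * fst y j) mod int p), (\<lambda>j. (c * snd y j) mod int p))"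

definition is_code :: "nat \<Rightarrow> nat set \<Rightarrow> fpvec set \<Rightarrow> bool" where
  "is_code p R C \<longleftrightarrow> C \<subseteq> fp_vecs p R \<and> ((\<lambda>_. 0), (\<lambda>_. 0)) \<in> C
     \<and> (\<forall>y\<in>C. \<forall>y'\<in>C. vadd p y y' \<in> C) \<and> (\<forall>c. \<forall>y\<in>C. vsmult p c y \<in> C)"

definition symp :: "nat \<Rightarrow> nat set \<Rightarrow> fpvec \<Rightarrow> fpvec \<Rightarrow> int" where
  "symp p R y y' = (\<Sum>j\<in>R. fst y j * snd y' j - snd y j * fst y' j) mod int p"

definition symp_dual :: "nat \<Rightarrow> nat set \<Rightarrow> fpvec set \<Rightarrow> fpvec set" where
  "symp_dual p R C = {y \<in> fp_vecs p R. \<forall>x\<in>C. symp p R y x = 0}"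

(* sigma_J(C): codewords supported in J.  Identifying F_p^{2|J|} with vectors
   supported on J, the projection pi_J acts as the identity on these. *)
definition sigma :: "nat set \<Rightarrow> fpvec set \<Rightarrow> fpvec set" where
  "sigma J C = {y \<in> C. \<forall>j. j \<notin> J \<longrightarrow> fst y j = 0 \<and> snd y j = 0}"

definition basis :: "nat \<Rightarrow> nat set \<Rightarrow> basis_idx set" where
  "basis p R = {x. (\<forall>j\<in>R. 0 \<le> x j \<and> x j < int p) \<and> (\<forall>j. j \<notin> R \<longrightarrow> x j = 0)}"

definition xi :: "nat \<Rightarrow> int \<Rightarrow> complex" where
  "xi p k = cis (2 * pi * of_int k / of_nat p)"

definition is_qvec :: "nat \<Rightarrow> nat set \<Rightarrow> qvec \<Rightarrow> bool" where
  "is_qvec p R v \<longleftrightarrow> (\<forall>x. x \<notin> basis p R \<longrightarrow> v x = 0)"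

definition inner :: "nat \<Rightarrow> nat set \<Rightarrow> qvec \<Rightarrow> qvec \<Rightarrow> complex" where
  "inner p R u v = (\<Sum>x\<in>basis p R. cnj (u x) * v x)"

(* operators as matrix kernels  A x' x = <x'|A|x>, vanishing off basis x basis *)
definition kid :: "nat \<Rightarrow> nat set \<Rightarrow> kern" where
  "kid p R x' x = (if x \<in> basis p R \<and> x' = x then 1 else 0)"

definition kscal :: "complex \<Rightarrow> kern \<Rightarrow> kern" where
  "kscal c A x' x = c * A x' x"

definition kmult :: "nat \<Rightarrow> nat set \<Rightarrow> kern \<Rightarrow> kern \<Rightarrow> kern" where
  "kmult p R A B x' x = (\<Sum>y\<in>basis p R. A x' y * B y x)"

definition kapply :: "nat \<Rightarrow> nat set \<Rightarrow> kern \<Rightarrow> qvec \<Rightarrow> qvec" where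
  "kapply p R A v x' = (\<Sum>x\<in>basis p R. A x' x * v x)"

(* E_(a,b) = tensor_j X(a_j) Z(b_j):  |x> \<mapsto> xi^(b.x) |x + a> *)
definition pauli :: "nat \<Rightarrow> nat set \<Rightarrow> fpvec \<Rightarrow> kern" where
  "pauli p R y x' x =
     (if x \<in> basis p R \<and> x' = (\<lambda>j. if j \<in> R then (x j + fst y j) mod int p else 0)
      then xi p (\<Sum>j\<in>R. snd y j * x j) else 0)"

inductive_set stab :: "nat \<Rightarrow> nat set \<Rightarrow> fpvec set \<Rightarrow> kern set"
  for p :: nat and R :: "nat set" and D :: "fpvec set" where
  scal: "kscal (xi p l) (kid p R) \<in> stab p R D"
| gen: "y \<in> D \<Longrightarrow> pauli p R y \<in> stab p R D"
| mult: "A \<in> stab p R D \<Longrightarrow> B \<in> stab p R D \<Longrightarrow> kmult p R A B \<in> stab p R D"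

definition is_char :: "nat \<Rightarrow> nat set \<Rightarrow> fpvec set \<Rightarrow> (kern \<Rightarrow> complex) \<Rightarrow> bool" where
  "is_char p R D lam \<longleftrightarrow>
     (\<forall>A\<in>stab p R D. \<forall>B\<in>stab p R D. lam (kmult p R A B) = lam A * lam B)
     \<and> lam (kscal (xi p 1) (kid p R)) = xi p 1"

definition qspace :: "nat \<Rightarrow> nat set \<Rightarrow> fpvec set \<Rightarrow> (kern \<Rightarrow> complex) \<Rightarrow> qvec set" where
  "qspace p R D lam = {v. is_qvec p R v \<and>
      (\<forall>A\<in>stab p R D. kapply p R A v = (\<lambda>x. lam A * v x))}"

definition proj_vec :: "qvec \<Rightarrow> kern" where
  "proj_vec v x' x = v x' * cnj (v x)"

definition ptrace :: "nat \<Rightarrow> nat set \<Rightarrow> nat set \<Rightarrow> kern \<Rightarrow> kern" where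
  "ptrace p Rall J rho x' x =
     (if x' \<in> basis p J \<and> x \<in> basis p J then
        (\<Sum>z\<in>basis p (Rall - J). rho (\<lambda>j. if j \<in> J then x' j else z j) (\<lambda>j. if j \<in> J then x j else z j))
      else 0)"

definition lin_span :: "qvec list \<Rightarrow> qvec set" where
  "lin_span es = {v. \<exists>c. v = (\<lambda>x. \<Sum>i<length es. c i * (es ! i) x)}"

definition is_onb :: "nat \<Rightarrow> nat set \<Rightarrow> qvec list \<Rightarrow> qvec set \<Rightarrow> bool" where
  "is_onb p R es V \<longleftrightarrow> (\<forall>i<length es. \<forall>k<length es.
        inner p R (es ! i) (es ! k) = (if i = k then 1 else 0)) \<and> lin_span es = V"

definition completely_mixed :: "nat \<Rightarrow> nat set \<Rightarrow> kern \<Rightarrow> qvec set \<Rightarrow> bool" where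
  "completely_mixed p R rho V \<longleftrightarrow> (\<exists>es. es \<noteq> [] \<and> is_onb p R es V \<and>
      rho = (\<lambda>x' x. (\<Sum>i<length es. (es ! i) x' * cnj ((es ! i) x)) / of_nat (length es)))"

end

theory Submission
  imports Defs "HOL-Library.Real_Mod"
begin

definition sh :: "nat \<Rightarrow> nat set \<Rightarrow> basis_idx \<Rightarrow> basis_idx \<Rightarrow> basis_idx" where
  "sh p R x a = (\<lambda>j. if j \<in> R then (x j + a j) mod int p else 0)"

definition dot :: "nat set \<Rightarrow> (nat \<Rightarrow> int) \<Rightarrow> (nat \<Rightarrow> int) \<Rightarrow> int" where
  "dot R b x = (\<Sum>j\<in>R. b j * x j)"

lemma xi_add: "xi p (k + l) = xi p k * xi p l"
  unfolding xi_def by (simp add: cis_mult add_divide_distrib distrib_left)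

lemma xi_mult_p: "p > 0 \<Longrightarrow> xi p (int p * m) = 1"
proof -
  assume "p > 0"
  have "2 * pi * real_of_int (int p * m) / real p = 2 * pi * real_of_int m"
    using \<open>p > 0\<close> by simp
  then show ?thesis unfolding xi_def by simp
qed

lemma xi_mod: "p > 0 \<Longrightarrow> xi p (k mod int p) = xi p k"
proof -
  assume p: "p > 0"
  have "k = k mod int p + int p * (k div int p)" by simp
  then have "xi p k = xi p (k mod int p) * xi p (int p * (k div int p))"
    by (metis xi_add)
  with xi_mult_p[OF p] show ?thesis by simp
qed

lemma xi_cong: "p > 0 \<Longrightarrow> k mod int p = l mod int p \<Longrightarrow> xi p k = xi p l"
  by (metis xi_mod)

lemma xi_zero[simp]: "xi p 0 = 1"
  unfolding xi_def by simp

lemma xi_cnj: "cnj (xi p k) = xi p (- k)"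
  unfolding xi_def by (simp add: cis_cnj)

lemma xi_norm[simp]: "cmod (xi p k) = 1"
  unfolding xi_def by simp

lemma xi_cnj_mult[simp]: "cnj (xi p k) * xi p k = 1"
  by (metis xi_add xi_cnj add.left_inverse xi_zero)

lemma xi_mult_cnj[simp]: "xi p k * cnj (xi p k) = 1"
  by (metis xi_cnj_mult mult.commute)

lemma xi_nonzero[simp]: "xi p k \<noteq> 0"
  by (metis xi_norm norm_zero zero_neq_one)

lemma xi_eq_1: "p > 0 \<Longrightarrow> xi p k = 1 \<Longrightarrow> k mod int p = 0"
proof -
  assume p: "p > 0" and h: "xi p k = 1"
  then obtain m where m: "2 * pi * real_of_int k / real p = of_int m * (2 * pi)"
    unfolding xi_def cis_eq_1_iff by blast
  then have "real_of_int k = real_of_int m * real p"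
    using p by (simp add: field_simps)
  then have "k = m * int p"
    by (metis of_int_eq_iff of_int_mult of_int_of_nat_eq)
  then show ?thesis by simp
qed

lemma xi_pow: "xi p k ^ m = xi p (k * int m)"
  by (induction m) (simp_all add: xi_add[symmetric] algebra_simps)



lemma finite_basis: "finite R \<Longrightarrow> finite (basis p R)"
proof -
  assume R: "finite R"
  have "basis p R \<subseteq> {f. \<forall>x. (x \<in> R \<longrightarrow> f x \<in> {0..<int p}) \<and> (x \<notin> R \<longrightarrow> f x = 0)}"
    unfolding basis_def by auto
  moreover have "finite {f. \<forall>x. (x \<in> R \<longrightarrow> f x \<in> {0..<int p}) \<and> (x \<notin> R \<longrightarrow> f x = (0::int))}"
    by (rule finite_set_of_finite_funs) (use R in auto)
  ultimately show ?thesis by (rule finite_subset)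
qed

lemma sh_in_basis: "p > 0 \<Longrightarrow> sh p R x a \<in> basis p R"
  unfolding sh_def basis_def by auto

lemma basis_mod: "x \<in> basis p R \<Longrightarrow> j \<in> R \<Longrightarrow> x j mod int p = x j"
  unfolding basis_def by auto

lemma basis_out: "x \<in> basis p R \<Longrightarrow> j \<notin> R \<Longrightarrow> x j = 0"
  unfolding basis_def by auto

lemma sh_inj: assumes "x \<in> basis p R" "x' \<in> basis p R" "sh p R x a = sh p R x' a"
  shows "x = x'"
proof
  fix j
  show "x j = x' j"
  proof (cases "j \<in> R")
    case True
    then have "(x j + a j) mod int p = (x' j + a j) mod int p"
      using assms(3) unfolding sh_def by meson
    then have "x j mod int p = x' j mod int p"
      by (metis add_diff_cancel_right' mod_diff_left_eq)
    then show ?thesis using basis_mod[OF assms(1) True] basis_mod[OF assms(2) True] by simp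
  next
    case False
    then show ?thesis using basis_out[OF assms(1)] basis_out[OF assms(2)] by simp
  qed
qed

lemma sh_sh: "sh p R (sh p R x a) b = sh p R x (\<lambda>j. a j + b j)"
  unfolding sh_def by (auto simp: fun_eq_iff mod_add_left_eq add.assoc)

lemma sh_comm: "sh p R (sh p R x a) b = sh p R (sh p R x b) a"
  unfolding sh_sh by (simp add: add.commute)

lemma sh_neg: "x \<in> basis p R \<Longrightarrow> sh p R (sh p R x a) (\<lambda>j. - a j) = x"
  unfolding sh_sh by (auto simp: fun_eq_iff sh_def basis_mod basis_out)

lemma sh_bij: "p > 0 \<Longrightarrow> bij_betw (\<lambda>x. sh p R x a) (basis p R) (basis p R)"
  apply (rule bij_betw_byWitness[where f' = "\<lambda>x. sh p R x (\<lambda>j. - a j)"])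
  using sh_neg[of _ p R a] sh_neg[of _ p R "\<lambda>j. - a j"] sh_in_basis[of p R]
  by auto

lemma sum_sh: "p > 0 \<Longrightarrow> (\<Sum>x\<in>basis p R. f (sh p R x a)) = (\<Sum>x\<in>basis p R. f x)"
  using sum.reindex_bij_betw[OF sh_bij] by blast

lemma sh_surj: "p > 0 \<Longrightarrow> x' \<in> basis p R \<Longrightarrow> \<exists>x\<in>basis p R. x' = sh p R x a"
  using sh_bij[of p R a] unfolding bij_betw_def by auto

lemma fp_vecs_basis: "fp_vecs p R = basis p R \<times> basis p R"
  unfolding fp_vecs_def basis_def by auto

lemma dot_sh: "dot R b (sh p R x a) mod int p = (dot R b x + dot R b a) mod int p"
proof -
  have "dot R b (sh p R x a) mod int p = (\<Sum>j\<in>R. b j * ((x j + a j) mod int p)) mod int p"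
    unfolding dot_def sh_def by simp
  also have "\<dots> = (\<Sum>j\<in>R. b j * ((x j + a j) mod int p) mod int p) mod int p"
    by (simp add: mod_sum_eq)
  also have "\<dots> = (\<Sum>j\<in>R. b j * (x j + a j) mod int p) mod int p"
    by (simp add: mod_mult_right_eq)
  also have "\<dots> = (\<Sum>j\<in>R. b j * (x j + a j)) mod int p"
    by (simp add: mod_sum_eq)
  also have "\<dots> = (dot R b x + dot R b a) mod int p"
    unfolding dot_def by (simp add: distrib_left sum.distrib)
  finally show ?thesis .
qed

lemma xi_dot_sh: "p > 0 \<Longrightarrow> xi p (dot R b (sh p R x a)) = xi p (dot R b x) * xi p (dot R b a)"
  by (metis xi_add xi_cong dot_sh)

lemma pauli_sh_eq: "pauli p R y x' x = (if x \<in> basis p R \<and> x' = sh p R x (fst y) then xi p (dot R (snd y) x) else 0)"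
  unfolding pauli_def sh_def dot_def by simp

lemma kapply_pauli_sh:
  assumes p: "p > 0" and x: "x \<in> basis p R" and fin: "finite R"
  shows "kapply p R (pauli p R y) v (sh p R x (fst y)) = xi p (dot R (snd y) x) * v x"
proof -
  have "kapply p R (pauli p R y) v (sh p R x (fst y))
      = (\<Sum>x''\<in>basis p R. if x'' = x then xi p (dot R (snd y) x) * v x else 0)"
    unfolding kapply_def pauli_sh_eq
    apply (rule sum.cong[OF refl])
    using sh_inj[OF _ x, of _ "fst y"] by auto
  also have "\<dots> = xi p (dot R (snd y) x) * v x"
    using x finite_basis[OF fin] by simp
  finally show ?thesis .
qed

lemma kapply_pauli_out:
  assumes p: "p > 0" and x': "x' \<notin> basis p R"
  shows "kapply p R (pauli p R y) v x' = 0"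
  unfolding kapply_def pauli_sh_eq
  by (rule sum.neutral) (use sh_in_basis[OF p] x' in auto)

lemma eigen_iff:
  assumes p: "p > 0" and fin: "finite R" and v: "is_qvec p R v"
  shows "kapply p R (pauli p R y) v = (\<lambda>x. c * v x) \<longleftrightarrow>
         (\<forall>x\<in>basis p R. xi p (dot R (snd y) x) * v x = c * v (sh p R x (fst y)))"
proof
  assume h: "kapply p R (pauli p R y) v = (\<lambda>x. c * v x)"
  show "\<forall>x\<in>basis p R. xi p (dot R (snd y) x) * v x = c * v (sh p R x (fst y))"
    using kapply_pauli_sh[OF p _ fin, of _ y v] h by metis
next
  assume h: "\<forall>x\<in>basis p R. xi p (dot R (snd y) x) * v x = c * v (sh p R x (fst y))"
  show "kapply p R (pauli p R y) v = (\<lambda>x. c * v x)"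
  proof
    fix x'
    show "kapply p R (pauli p R y) v x' = c * v x'"
    proof (cases "x' \<in> basis p R")
      case True
      then obtain x where x: "x \<in> basis p R" "x' = sh p R x (fst y)"
        using sh_surj[OF p] by blast
      then show ?thesis using kapply_pauli_sh[OF p x(1) fin] h by simp
    next
      case False
      then show ?thesis using kapply_pauli_out[OF p False] v unfolding is_qvec_def by simp
    qed
  qed
qed

lemma inner_pauli:
  assumes p: "p > 0" and fin: "finite R"
  shows "inner p R w (kapply p R (pauli p R y) v)
     = (\<Sum>x\<in>basis p R. cnj (w (sh p R x (fst y))) * xi p (dot R (snd y) x) * v x)"
proof -
  have "inner p R w (kapply p R (pauli p R y) v)
      = (\<Sum>x\<in>basis p R. cnj (w (sh p R x (fst y))) * kapply p R (pauli p R y) v (sh p R x (fst y)))"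
    unfolding inner_def using sum_sh[OF p, of "\<lambda>x. cnj (w x) * kapply p R (pauli p R y) v x"]
    by simp
  also have "\<dots> = (\<Sum>x\<in>basis p R. cnj (w (sh p R x (fst y))) * xi p (dot R (snd y) x) * v x)"
    using kapply_pauli_sh[OF p _ fin] by (simp add: mult.assoc)
  finally show ?thesis .
qed



lemma sum_int_range: "(\<Sum>t\<in>{0..<int p}. f t) = (\<Sum>i<p. f (int i))"
proof -
  have "{0..<int p} = int ` {..<p}"
    by (auto simp: image_iff) (metis lessThan_iff nonneg_int_cases of_nat_less_iff)
  then show ?thesis by (simp add: sum.reindex)
qed

lemma char_sum1:
  assumes p: "p > 1"
  shows "(\<Sum>t\<in>{0..<int p}. xi p (t * d)) = (if d mod int p = 0 then of_nat p else 0)"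
proof -
  have p0: "p > 0" using p by simp
  have eq: "(\<Sum>t\<in>{0..<int p}. xi p (t * d)) = (\<Sum>i<p. xi p d ^ i)"
    unfolding sum_int_range by (simp add: xi_pow mult.commute)
  show ?thesis
  proof (cases "d mod int p = 0")
    case True
    then have "xi p d = 1" using xi_cong[OF p0, of d 0] by simp
    then show ?thesis using True eq by simp
  next
    case False
    then have ne: "xi p d \<noteq> 1" using xi_eq_1[OF p0] by blast
    have "xi p d ^ p = 1" using xi_pow[of p d p] xi_mult_p[OF p0, of d] by (simp add: mult.commute)
    then show ?thesis using False eq geometric_sum[OF ne, of p] by simp
  qed
qed

lemma basis_empty: "basis p {} = {\<lambda>_. 0}"
  unfolding basis_def by auto

lemma basis_insert:
  assumes "j \<notin> J"
  shows "basis p (insert j J) = (\<lambda>(t,b). b(j:=t)) ` ({0..<int p} \<times> basis p J)"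
proof (rule set_eqI, rule iffI)
  fix x assume x: "x \<in> basis p (insert j J)"
  have "x = (x(j:=0))(j := x j)" by simp
  moreover have "x(j:=0) \<in> basis p J" using x assms unfolding basis_def by auto
  moreover have "x j \<in> {0..<int p}" using x unfolding basis_def by auto
  ultimately show "x \<in> (\<lambda>(t,b). b(j:=t)) ` ({0..<int p} \<times> basis p J)"
    by (intro rev_image_eqI[where x = "(x j, x(j:=0))"]) auto
next
  fix x assume "x \<in> (\<lambda>(t,b). b(j:=t)) ` ({0..<int p} \<times> basis p J)"
  then show "x \<in> basis p (insert j J)" unfolding basis_def by auto
qed

lemma basis_insert_inj:
  assumes "j \<notin> J"
  shows "inj_on (\<lambda>(t,b). b(j:=t)) ({0..<int p} \<times> basis p J)"
proof (rule inj_onI, clarify)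
  fix t b t' b'
  assume b: "b \<in> basis p J" "b' \<in> basis p J" and e: "b(j := t) = b'(j := t')"
  have "t = t'" using fun_cong[OF e, of j] by simp
  moreover have "b = b'"
  proof
    fix i show "b i = b' i"
      using fun_cong[OF e, of i] basis_out[OF b(1), of j] basis_out[OF b(2), of j] assms
      by (cases "i = j") auto
  qed
  ultimately show "t = t' \<and> b = b'" by simp
qed

lemma char_sum:
  assumes p: "p > 1" and fin: "finite J"
  shows "(\<Sum>b\<in>basis p J. xi p (dot J b d)) = (if \<forall>j\<in>J. d j mod int p = 0 then of_nat p ^ card J else 0)"
  using fin
proof (induction J rule: finite_induct)
  case empty
  then show ?case by (simp add: basis_empty dot_def)
next
  case (insert j J)
  have "(\<Sum>b\<in>basis p (insert j J). xi p (dot (insert j J) b d))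
      = (\<Sum>(t,b)\<in>{0..<int p} \<times> basis p J. xi p (dot (insert j J) (b(j:=t)) d))"
    unfolding basis_insert[OF insert(2)]
    by (subst sum.reindex[OF basis_insert_inj[OF insert(2)]]) (simp add: case_prod_beta)
  also have "\<dots> = (\<Sum>(t,b)\<in>{0..<int p} \<times> basis p J. xi p (t * d j) * xi p (dot J b d))"
  proof (rule sum.cong[OF refl], clarify)
    fix t b
    have "dot (insert j J) (b(j:=t)) d = t * d j + dot J b d"
      unfolding dot_def using insert(1,2)
      by (simp add: sum.insert) (rule sum.cong, auto)
    then show "xi p (dot (insert j J) (b(j:=t)) d) = xi p (t * d j) * xi p (dot J b d)"
      by (simp add: xi_add)
  qed
  also have "\<dots> = (\<Sum>t\<in>{0..<int p}. xi p (t * d j)) * (\<Sum>b\<in>basis p J. xi p (dot J b d))"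
    by (simp add: sum_product sum.cartesian_product)
  also have "\<dots> = (if \<forall>i\<in>insert j J. d i mod int p = 0 then of_nat p ^ card (insert j J) else 0)"
    unfolding char_sum1[OF p] insert(3) using insert(1,2) by auto
  finally show ?case .
qed

definition merge :: "nat set \<Rightarrow> basis_idx \<Rightarrow> basis_idx \<Rightarrow> basis_idx" where
  "merge J u w = (\<lambda>j. if j \<in> J then u j else w j)"

lemma merge_bij:
  assumes "J \<subseteq> R"
  shows "bij_betw (\<lambda>(u,w). merge J u w) (basis p J \<times> basis p (R - J)) (basis p R)"
  apply (rule bij_betw_byWitness[where f' = "\<lambda>x. (\<lambda>j. if j \<in> J then x j else 0, \<lambda>j. if j \<in> R - J then x j else 0)"])
  using assms unfolding merge_def basis_def by (auto simp: fun_eq_iff)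

lemma sum_merge:
  assumes "J \<subseteq> R"
  shows "(\<Sum>x\<in>basis p R. f x) = (\<Sum>u\<in>basis p J. \<Sum>w\<in>basis p (R - J). f (merge J u w))"
proof -
  have "(\<Sum>x\<in>basis p R. f x) = (\<Sum>uw\<in>basis p J \<times> basis p (R - J). f ((\<lambda>(u,w). merge J u w) uw))"
    using sum.reindex_bij_betw[OF merge_bij[OF assms], of f] by simp
  also have "\<dots> = (\<Sum>u\<in>basis p J. \<Sum>w\<in>basis p (R - J). f (merge J u w))"
    by (simp add: sum.cartesian_product case_prod_beta)
  finally show ?thesis .
qed

lemma merge_in_basis: "J \<subseteq> R \<Longrightarrow> u \<in> basis p J \<Longrightarrow> w \<in> basis p (R - J) \<Longrightarrow> merge J u w \<in> basis p R"
  using merge_bij[of J R p] unfolding bij_betw_def by auto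

definition trE :: "nat \<Rightarrow> nat set \<Rightarrow> fpvec \<Rightarrow> kern \<Rightarrow> complex" where
  "trE p J z M = (\<Sum>x\<in>basis p J. cnj (xi p (dot J (snd z) x)) * M (sh p J x (fst z)) x)"

lemma sh_swap: "sh p R x a = sh p R a x"
  unfolding sh_def by (rule ext) (simp add: add.commute)

lemma kexp:
  assumes p: "p > 1" and fin: "finite J"
    and M: "\<And>u' u. u' \<notin> basis p J \<or> u \<notin> basis p J \<Longrightarrow> M u' u = 0"
  shows "M u' u = (\<Sum>z\<in>fp_vecs p J. trE p J z M * pauli p J z u' u) / of_nat p ^ card J"
proof (cases "u' \<in> basis p J \<and> u \<in> basis p J")
  case False
  have p0: "p > 0" using p by simp
  have "pauli p J z u' u = 0" for z
    using False sh_in_basis[OF p0] unfolding pauli_sh_eq by auto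
  then show ?thesis using M False by simp
next
  case True
  have p0: "p > 0" using p by simp
  have fB: "finite (basis p J)" using finite_basis[OF fin] .
  let ?P = "of_nat p ^ card J :: complex"
  have inner_b: "(\<Sum>b\<in>basis p J. cnj (xi p (dot J b x)) * xi p (dot J b u)) = (if x = u then ?P else 0)"
    if x: "x \<in> basis p J" for x
  proof -
    have "(\<Sum>b\<in>basis p J. cnj (xi p (dot J b x)) * xi p (dot J b u))
        = (\<Sum>b\<in>basis p J. xi p (dot J b (\<lambda>j. u j - x j)))"
      by (rule sum.cong[OF refl]) (simp add: xi_cnj xi_add[symmetric] dot_def sum_subtractf right_diff_distrib)
    also have "\<dots> = (if \<forall>j\<in>J. (u j - x j) mod int p = 0 then ?P else 0)"
      by (rule char_sum[OF p fin])
    also have "(\<forall>j\<in>J. (u j - x j) mod int p = 0) \<longleftrightarrow> x = u"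
    proof
      assume h: "\<forall>j\<in>J. (u j - x j) mod int p = 0"
      show "x = u"
      proof
        fix j show "x j = u j"
        proof (cases "j \<in> J")
          case True
          then have "x j mod int p = u j mod int p" using h by (metis mod_eq_dvd_iff dvd_eq_mod_eq_0)
          then show ?thesis using basis_mod[OF x True] basis_mod[of u p J j] True \<open>u' \<in> basis p J \<and> u \<in> basis p J\<close> by simp
        next
          case False
          then show ?thesis using basis_out[OF x False] basis_out[of u p J j] \<open>u' \<in> basis p J \<and> u \<in> basis p J\<close> by simp
        qed
      qed
    qed simp
    finally show ?thesis .
  qed
  have "(\<Sum>z\<in>fp_vecs p J. trE p J z M * pauli p J z u' u)
      = (\<Sum>a\<in>basis p J. \<Sum>b\<in>basis p J. trE p J (a,b) M * pauli p J (a,b) u' u)"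
    unfolding fp_vecs_basis by (simp add: sum.cartesian_product)
  also have "\<dots> = (\<Sum>a\<in>basis p J. if u' = sh p J u a then
                     (\<Sum>x\<in>basis p J. M (sh p J x a) x * (\<Sum>b\<in>basis p J. cnj (xi p (dot J b x)) * xi p (dot J b u))) else 0)"
  proof (rule sum.cong[OF refl])
    fix a assume a: "a \<in> basis p J"
    show "(\<Sum>b\<in>basis p J. trE p J (a,b) M * pauli p J (a,b) u' u) = (if u' = sh p J u a then
                     (\<Sum>x\<in>basis p J. M (sh p J x a) x * (\<Sum>b\<in>basis p J. cnj (xi p (dot J b x)) * xi p (dot J b u))) else 0)"
    proof (cases "u' = sh p J u a")
      case True
      then have "(\<Sum>b\<in>basis p J. trE p J (a,b) M * pauli p J (a,b) u' u)
          = (\<Sum>b\<in>basis p J. \<Sum>x\<in>basis p J. M (sh p J x a) x * (cnj (xi p (dot J b x)) * xi p (dot J b u)))"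
        using \<open>u' \<in> basis p J \<and> u \<in> basis p J\<close>
        unfolding trE_def pauli_sh_eq by (simp add: sum_distrib_left sum_distrib_right mult_ac)
      also have "\<dots> = (\<Sum>x\<in>basis p J. M (sh p J x a) x * (\<Sum>b\<in>basis p J. cnj (xi p (dot J b x)) * xi p (dot J b u)))"
        by (subst sum.swap) (simp add: sum_distrib_left)
      finally show ?thesis using True by simp
    next
      case False
      then show ?thesis unfolding pauli_sh_eq by simp
    qed
  qed
  also have "\<dots> = (\<Sum>a\<in>basis p J. if u' = sh p J u a then M (sh p J u a) u * ?P else 0)"
  proof (rule sum.cong[OF refl])
    fix a
    have "(\<Sum>x\<in>basis p J. M (sh p J x a) x * (\<Sum>b\<in>basis p J. cnj (xi p (dot J b x)) * xi p (dot J b u)))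
        = (\<Sum>x\<in>basis p J. if x = u then M (sh p J u a) u * ?P else 0)"
      by (rule sum.cong[OF refl]) (simp add: inner_b)
    also have "\<dots> = M (sh p J u a) u * ?P" using True fB by simp
    finally show "(if u' = sh p J u a then (\<Sum>x\<in>basis p J. M (sh p J x a) x * (\<Sum>b\<in>basis p J. cnj (xi p (dot J b x)) * xi p (dot J b u))) else 0)
      = (if u' = sh p J u a then M (sh p J u a) u * ?P else 0)" by simp
  qed
  also have "\<dots> = M u' u * ?P"
  proof -
    obtain a0 where a0: "a0 \<in> basis p J" "u' = sh p J a0 u"
      using sh_surj[OF p0] True by blast
    have "(\<Sum>a\<in>basis p J. if u' = sh p J u a then M (sh p J u a) u * ?P else 0)
        = (\<Sum>a\<in>basis p J. if a = a0 then M u' u * ?P else 0)"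
    proof (rule sum.cong[OF refl])
      fix a assume a: "a \<in> basis p J"
      have "u' = sh p J u a \<longleftrightarrow> a = a0"
        using sh_inj[OF a a0(1), of u] a0(2) sh_swap[of p J u] by metis
      then show "(if u' = sh p J u a then M (sh p J u a) u * ?P else 0) = (if a = a0 then M u' u * ?P else 0)"
        by auto
    qed
    also have "\<dots> = M u' u * ?P" using a0 fB by simp
    finally show ?thesis .
  qed
  finally show ?thesis using p by simp
qed



lemma kapply_kscal_kid:
  assumes fin: "finite R" and v: "is_qvec p R v"
  shows "kapply p R (kscal c (kid p R)) v = (\<lambda>x. c * v x)"
proof
  fix x'
  have "kapply p R (kscal c (kid p R)) v x' = (\<Sum>x\<in>basis p R. if x = x' then c * v x' else 0)"
    unfolding kapply_def kscal_def kid_def by (rule sum.cong) auto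
  also have "\<dots> = c * v x'"
    using finite_basis[OF fin] v unfolding is_qvec_def by auto
  finally show "kapply p R (kscal c (kid p R)) v x' = c * v x'" .
qed

lemma kapply_kmult:
  shows "kapply p R (kmult p R A B) v = kapply p R A (kapply p R B v)"
proof
  fix x'
  have "kapply p R (kmult p R A B) v x' = (\<Sum>x\<in>basis p R. \<Sum>y\<in>basis p R. A x' y * (B y x * v x))"
    unfolding kapply_def kmult_def by (simp add: sum_distrib_right mult.assoc)
  also have "\<dots> = (\<Sum>y\<in>basis p R. \<Sum>x\<in>basis p R. A x' y * (B y x * v x))"
    by (rule sum.swap)
  also have "\<dots> = kapply p R A (kapply p R B v) x'"
    unfolding kapply_def by (simp add: sum_distrib_left)
  finally show "kapply p R (kmult p R A B) v x' = kapply p R A (kapply p R B v) x'" .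
qed

lemma kmult_kscal_kid:
  assumes fin: "finite R"
  shows "kmult p R (kscal c (kid p R)) (kscal d (kid p R)) = kscal (c*d) (kid p R)"
proof (rule ext, rule ext)
  fix x' x
  have "kmult p R (kscal c (kid p R)) (kscal d (kid p R)) x' x
      = (\<Sum>y\<in>basis p R. if y = x then (if x \<in> basis p R \<and> x' = x then c * d else 0) else 0)"
    unfolding kmult_def kscal_def kid_def by (rule sum.cong) auto
  also have "\<dots> = kscal (c*d) (kid p R) x' x"
    using finite_basis[OF fin] unfolding kscal_def kid_def by auto
  finally show "kmult p R (kscal c (kid p R)) (kscal d (kid p R)) x' x = kscal (c*d) (kid p R) x' x" .
qed

lemma kscal_one: "kscal 1 A = A"
  unfolding kscal_def by simp

lemma lam_scal:
  assumes fin: "finite R" and p: "p > 0" and ch: "is_char p R D lam"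
  shows "lam (kscal (xi p l) (kid p R)) = xi p l"
proof -
  let ?S = "\<lambda>m. kscal (xi p m) (kid p R)"
  have mult: "lam (kmult p R A B) = lam A * lam B" if "A \<in> stab p R D" "B \<in> stab p R D" for A B
    using ch that unfolding is_char_def by blast
  have S1: "lam (?S 1) = xi p 1" using ch unfolding is_char_def by blast
  have kidS: "kid p R = ?S 0" by (simp add: kscal_one)
  have "kmult p R (?S 0) (?S 1) = ?S 1"
    using kmult_kscal_kid[OF fin] by simp
  then have "lam (?S 1) = lam (?S 0) * lam (?S 1)"
    using mult[OF stab.scal stab.scal] by metis
  then have l0: "lam (?S 0) = 1" using S1 by simp
  have nat_case: "lam (?S (int m)) = xi p (int m)" for m
  proof (induction m)
    case 0 then show ?case using l0 by simp
  next
    case (Suc m)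
    have "kmult p R (?S 1) (?S (int m)) = ?S (int (Suc m))"
      using kmult_kscal_kid[OF fin] by (simp add: xi_add[symmetric] add.commute)
    then have "lam (?S (int (Suc m))) = lam (?S 1) * lam (?S (int m))"
      using mult[OF stab.scal stab.scal] by metis
    then show ?case using Suc S1 by (simp add: xi_add[symmetric] add.commute)
  qed
  have "xi p l = xi p (int (nat (l mod int p)))"
    using xi_mod[OF p, of l] p by simp
  then show ?thesis using nat_case by metis
qed

lemma qspace_gen:
  assumes fin: "finite R" and p: "p > 0" and ch: "is_char p R D lam" and v: "is_qvec p R v"
    and gen: "\<And>y. y \<in> D \<Longrightarrow> kapply p R (pauli p R y) v = (\<lambda>x. lam (pauli p R y) * v x)"
  shows "v \<in> qspace p R D lam"
proof -
  have "A \<in> stab p R D \<Longrightarrow> kapply p R A v = (\<lambda>x. lam A * v x)" for A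
  proof (induction rule: stab.induct)
    case (scal l)
    then show ?case using kapply_kscal_kid[OF fin v] lam_scal[OF fin p ch] by simp
  next
    case (gen y)
    then show ?case using assms(5) by blast
  next
    case (mult A B)
    have "lam (kmult p R A B) = lam A * lam B" using ch mult(1,2) unfolding is_char_def by blast
    moreover have "kapply p R (kmult p R A B) v = (\<lambda>x. lam A * (lam B * v x))"
    proof -
      have "kapply p R A (\<lambda>x. lam B * v x) = (\<lambda>x. lam B * kapply p R A v x)"
        unfolding kapply_def by (simp add: sum_distrib_left mult_ac)
      then show ?thesis unfolding kapply_kmult mult(4) mult(3) by (simp add: mult_ac)
    qed
    ultimately show ?case by (simp add: mult.assoc)
  qed
  then show ?thesis unfolding qspace_def using v by blast
qed

lemma qspace_pauli:
  "v \<in> qspace p R D lam \<Longrightarrow> y \<in> D \<Longrightarrow> kapply p R (pauli p R y) v = (\<lambda>x. lam (pauli p R y) * v x)"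
  unfolding qspace_def using stab.gen by blast

lemma qspace_qvec: "v \<in> qspace p R D lam \<Longrightarrow> is_qvec p R v"
  unfolding qspace_def by blast

lemma qspace_lincomb:
  assumes S: "finite S" and f: "\<And>s. s \<in> S \<Longrightarrow> f s \<in> qspace p R D lam"
  shows "(\<lambda>x. \<Sum>s\<in>S. c s * f s x) \<in> qspace p R D lam"
proof -
  have q: "is_qvec p R (\<lambda>x. \<Sum>s\<in>S. c s * f s x)"
    using f unfolding qspace_def is_qvec_def by simp
  have "kapply p R A (\<lambda>x. \<Sum>s\<in>S. c s * f s x) = (\<lambda>x. lam A * (\<Sum>s\<in>S. c s * f s x))"
    if A: "A \<in> stab p R D" for A
  proof
    fix x'
    have "kapply p R A (\<lambda>x. \<Sum>s\<in>S. c s * f s x) x' = (\<Sum>s\<in>S. c s * kapply p R A (f s) x')"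
      unfolding kapply_def by (simp add: sum_distrib_left mult_ac) (rule sum.swap)
    also have "\<dots> = (\<Sum>s\<in>S. c s * (lam A * f s x'))"
      using f A unfolding qspace_def by (intro sum.cong) auto
    finally show "kapply p R A (\<lambda>x. \<Sum>s\<in>S. c s * f s x) x' = lam A * (\<Sum>s\<in>S. c s * f s x')"
      by (simp add: sum_distrib_left mult_ac)
  qed
  then show ?thesis unfolding qspace_def using q by blast
qed



lemma inner_cnj: "cnj (inner p R u v) = inner p R v u"
  unfolding inner_def by (simp add: mult.commute)

lemma inner_sum_right: "inner p R u (\<lambda>x. \<Sum>s\<in>S. c s * f s x) = (\<Sum>s\<in>S. c s * inner p R u (f s))"
  unfolding inner_def sum_distrib_left by (subst sum.swap) (simp add: mult.left_commute)

lemma inner_sum_left: "inner p R (\<lambda>x. \<Sum>s\<in>S. c s * f s x) u = (\<Sum>s\<in>S. cnj (c s) * inner p R (f s) u)"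
  unfolding inner_def cnj_sum complex_cnj_mult sum_distrib_left sum_distrib_right by (subst sum.swap) (simp add: mult.assoc)

lemma inner_diff_right: "inner p R u (\<lambda>x. a x - b x) = inner p R u a - inner p R u b"
  unfolding inner_def by (simp add: right_diff_distrib sum_subtractf)

lemma inner_scale_right: "inner p R u (\<lambda>x. c * a x) = c * inner p R u a"
  unfolding inner_def by (simp add: sum_distrib_left mult_ac)

lemma inner_scale_left: "inner p R (\<lambda>x. c * a x) u = cnj c * inner p R a u"
  unfolding inner_def by (simp add: sum_distrib_left mult_ac)

lemma inner_self: "inner p R w w = complex_of_real (\<Sum>x\<in>basis p R. (cmod (w x))\<^sup>2)"
  unfolding inner_def of_real_sum complex_norm_square by (simp add: mult.commute)

lemma inner_self_zero:
  assumes fin: "finite R" and w: "is_qvec p R w" and z: "inner p R w w = 0"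
  shows "w = (\<lambda>x. 0)"
proof
  fix x
  have "(\<Sum>x\<in>basis p R. (cmod (w x))\<^sup>2) = 0" using z inner_self[of p R w] by (metis of_real_eq_0_iff)
  then have "\<forall>x\<in>basis p R. (cmod (w x))\<^sup>2 = 0"
    using sum_nonneg_eq_0_iff[OF finite_basis[OF fin], where f = "\<lambda>x. (cmod (w x))\<^sup>2"] by simp
  then show "w x = 0" using w unfolding is_qvec_def by (cases "x \<in> basis p R") auto
qed

definition subsp :: "qvec set \<Rightarrow> bool" where
  "subsp W \<longleftrightarrow> (\<lambda>x. 0) \<in> W \<and> (\<forall>u\<in>W. \<forall>v\<in>W. (\<lambda>x. u x + v x) \<in> W) \<and> (\<forall>c. \<forall>v\<in>W. (\<lambda>x. c * v x) \<in> W)"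

lemma subsp_add: "subsp W \<Longrightarrow> u \<in> W \<Longrightarrow> v \<in> W \<Longrightarrow> (\<lambda>x. u x + v x) \<in> W"
  unfolding subsp_def by blast

lemma subsp_scale: "subsp W \<Longrightarrow> v \<in> W \<Longrightarrow> (\<lambda>x. c * v x) \<in> W"
  unfolding subsp_def by blast

lemma subsp_sum:
  assumes W: "subsp W" and S: "finite S" and f: "\<And>s. s \<in> S \<Longrightarrow> f s \<in> W"
  shows "(\<lambda>x. \<Sum>s\<in>S. c s * f s x) \<in> W"
  using S f
proof (induction S rule: finite_induct)
  case empty
  then show ?case using W unfolding subsp_def by simp
next
  case (insert s S)
  have "(\<lambda>x. \<Sum>s\<in>insert s S. c s * f s x) = (\<lambda>x. c s * f s x + (\<Sum>s\<in>S. c s * f s x))"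
    using insert(1,2) by simp
  moreover have "(\<lambda>x. c s * f s x) \<in> W" using insert(4) subsp_scale[OF W] by simp
  ultimately show ?case using insert subsp_add[OF W] by simp
qed

lemma subsp_lin_span: "subsp (lin_span es)"
proof -
  have a: "(\<lambda>x. 0) \<in> lin_span es" unfolding lin_span_def by (auto intro!: exI[where x="\<lambda>_. 0"])
  have b: "(\<lambda>x. u x + v x) \<in> lin_span es" if "u \<in> lin_span es" "v \<in> lin_span es" for u v
  proof -
    from that obtain c d where "u = (\<lambda>x. \<Sum>i<length es. c i * (es ! i) x)" "v = (\<lambda>x. \<Sum>i<length es. d i * (es ! i) x)"
      unfolding lin_span_def by blast
    then show ?thesis unfolding lin_span_def
      by (auto intro!: exI[where x = "\<lambda>i. c i + d i"] simp: sum.distrib distrib_right)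
  qed
  have c: "(\<lambda>x. k * v x) \<in> lin_span es" if "v \<in> lin_span es" for k v
  proof -
    from that obtain c where "v = (\<lambda>x. \<Sum>i<length es. c i * (es ! i) x)"
      unfolding lin_span_def by blast
    then show ?thesis unfolding lin_span_def
      by (auto intro!: exI[where x = "\<lambda>i. k * c i"] simp: sum_distrib_left mult.assoc)
  qed
  show ?thesis unfolding subsp_def using a b c by blast
qed

lemma in_lin_span: "e \<in> set es \<Longrightarrow> e \<in> lin_span es"
proof -
  assume "e \<in> set es"
  then obtain i where i: "i < length es" "e = es ! i" by (metis in_set_conv_nth)
  have "(\<Sum>k<length es. (if k = i then 1 else 0) * (es ! k) x) = e x" for x
  proof -
    have "(\<Sum>k<length es. (if k = i then 1 else 0) * (es ! k) x) = (\<Sum>k<length es. if k = i then (es ! k) x else 0)"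
      by (rule sum.cong) auto
    then show ?thesis using i by simp
  qed
  then have "e = (\<lambda>x. \<Sum>k<length es. (if k = i then 1 else 0) * (es ! k) x)" by simp
  then show ?thesis unfolding lin_span_def by (auto intro!: exI[where x = "\<lambda>k. if k = i then 1 else (0::complex)"])
qed

lemma lin_span_sub: assumes "subsp W" "set es \<subseteq> W" shows "lin_span es \<subseteq> W"
proof
  fix v assume "v \<in> lin_span es"
  then obtain c where c: "v = (\<lambda>x. \<Sum>i<length es. c i * (es ! i) x)" unfolding lin_span_def by blast
  have "\<And>i. i \<in> {..<length es} \<Longrightarrow> es ! i \<in> W" using assms(2) nth_mem by blast
  then show "v \<in> W" unfolding c by (intro subsp_sum[OF assms(1)]) auto
qed

lemma lin_span_mono: "set es \<subseteq> lin_span vs \<Longrightarrow> lin_span es \<subseteq> lin_span vs"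
  using lin_span_sub subsp_lin_span by blast

lemma lin_span_qspace: assumes "set es \<subseteq> qspace p R D lam" shows "lin_span es \<subseteq> qspace p R D lam"
proof
  fix v assume "v \<in> lin_span es"
  then obtain c where c: "v = (\<lambda>x. \<Sum>i<length es. c i * (es ! i) x)" unfolding lin_span_def by blast
  have "\<And>i. i \<in> {..<length es} \<Longrightarrow> es ! i \<in> qspace p R D lam" using assms nth_mem by blast
  then show "v \<in> qspace p R D lam" unfolding c by (intro qspace_lincomb) auto
qed

definition orthonormal :: "nat \<Rightarrow> nat set \<Rightarrow> qvec list \<Rightarrow> bool" where
  "orthonormal p R es \<longleftrightarrow> (\<forall>i<length es. \<forall>k<length es. inner p R (es ! i) (es ! k) = (if i = k then 1 else 0))"

lemma gram_schmidt:
  assumes fin: "finite R"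
  shows "(\<forall>v\<in>set vs. is_qvec p R v) \<Longrightarrow> \<exists>es. orthonormal p R es \<and> lin_span es = lin_span vs \<and> (\<forall>e\<in>set es. is_qvec p R e)"
proof (induction vs)
  case Nil
  show ?case by (rule exI[where x = "[]"]) (simp add: orthonormal_def)
next
  case (Cons v vs)
  then obtain es where es: "orthonormal p R es" "lin_span es = lin_span vs" "\<forall>e\<in>set es. is_qvec p R e"
    by auto
  let ?m = "length es"
  define w where "w = (\<lambda>x. v x - (\<Sum>i<?m. inner p R (es ! i) v * (es ! i) x))"
  have wq: "is_qvec p R w" unfolding is_qvec_def
  proof (intro allI impI)
    fix x assume x: "x \<notin> basis p R"
    have "(es ! i) x = 0" if "i < ?m" for i using es(3) nth_mem[OF that] x unfolding is_qvec_def by blast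
    then show "w x = 0" unfolding w_def using Cons(2) x unfolding is_qvec_def by simp
  qed
  have worth: "inner p R (es ! k) w = 0" if k: "k < ?m" for k
  proof -
    have "inner p R (es ! k) w = inner p R (es ! k) v - (\<Sum>i<?m. inner p R (es ! i) v * inner p R (es ! k) (es ! i))"
      unfolding w_def inner_diff_right inner_sum_right ..
    also have "\<dots> = inner p R (es ! k) v - (\<Sum>i<?m. if i = k then inner p R (es ! k) v else 0)"
      using es(1) k unfolding orthonormal_def by (intro arg_cong2[where f = minus] refl sum.cong) auto
    also have "\<dots> = 0" using k by simp
    finally show ?thesis .
  qed
  have vsub: "lin_span vs \<subseteq> lin_span (v # vs)"
    by (rule lin_span_mono) (auto intro: in_lin_span)
  have v_in: "v \<in> lin_span (v # vs)" by (rule in_lin_span) simp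
  have es_sub: "set es \<subseteq> lin_span (v # vs)" using es(2) vsub in_lin_span by blast
  have w_in: "w \<in> lin_span (v # vs)"
  proof -
    have "w = (\<lambda>x. v x + (-1) * (\<Sum>i<?m. inner p R (es ! i) v * (es ! i) x))"
      unfolding w_def by simp
    also have "\<dots> \<in> lin_span (v # vs)"
      by (intro subsp_add[OF subsp_lin_span] v_in subsp_scale[OF subsp_lin_span]
          subsp_sum[OF subsp_lin_span]) (use es_sub in auto)
    finally show ?thesis .
  qed
  show ?case
  proof (cases "inner p R w w = 0")
    case True
    then have w0: "w = (\<lambda>x. 0)" using inner_self_zero[OF fin wq] by simp
    have "v = (\<lambda>x. \<Sum>i<?m. inner p R (es ! i) v * (es ! i) x)"
      using w0 unfolding w_def by (simp add: fun_eq_iff)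
    then have "v \<in> lin_span es" unfolding lin_span_def by (auto intro!: exI[where x = "\<lambda>i. inner p R (es ! i) v"])
    moreover have "set vs \<subseteq> lin_span es" using es(2) in_lin_span by blast
    ultimately have "lin_span (v # vs) \<subseteq> lin_span es" by (intro lin_span_mono) auto
    moreover have "lin_span es \<subseteq> lin_span (v # vs)" using es_sub by (rule lin_span_mono)
    ultimately show ?thesis using es by blast
  next
    case False
    define N where "N = (\<Sum>x\<in>basis p R. (cmod (w x))\<^sup>2)"
    have N: "inner p R w w = complex_of_real N" unfolding N_def by (rule inner_self)
    have Npos: "N > 0" using False N unfolding N_def
      by (metis (no_types, lifting) less_eq_real_def of_real_0 sum_nonneg zero_le_power2)
    define s where "s = complex_of_real (sqrt N)"
    have s0: "s \<noteq> 0" using Npos unfolding s_def by simp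
    have ss: "cnj s * s = complex_of_real N" unfolding s_def using Npos
      by (simp flip: of_real_mult)
    define e where "e = (\<lambda>x. (1 / s) * w x)"
    have ee: "inner p R e e = 1"
    proof -
      have "inner p R e e = of_real N / (cnj s * s)"
        unfolding e_def inner_scale_left inner_scale_right N by (simp add: field_simps)
      also have "\<dots> = 1" unfolding ss using Npos by simp
      finally show ?thesis .
    qed
    have eorth: "inner p R (es ! k) e = 0" if "k < ?m" for k
      unfolding e_def inner_scale_right using worth[OF that] by simp
    let ?es = "es @ [e]"
    have on: "orthonormal p R ?es"
      unfolding orthonormal_def
    proof (intro allI impI)
      fix i k assume i: "i < length ?es" and k: "k < length ?es"
      show "inner p R (?es ! i) (?es ! k) = (if i = k then 1 else 0)"
      proof (cases "i < ?m"; cases "k < ?m")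
        assume "i < ?m" "k < ?m" then show ?thesis using es(1) unfolding orthonormal_def by (simp add: nth_append)
      next
        assume "i < ?m" "\<not> k < ?m" then have "k = ?m" using k by simp
        then show ?thesis using eorth[OF \<open>i < ?m\<close>] \<open>i < ?m\<close> by (simp add: nth_append)
      next
        assume "\<not> i < ?m" "k < ?m" then have "i = ?m" using i by simp
        then show ?thesis using eorth[OF \<open>k < ?m\<close>] \<open>k < ?m\<close> inner_cnj[of p R e "es ! k"]
          by (simp add: nth_append)
      next
        assume "\<not> i < ?m" "\<not> k < ?m" then have "i = ?m" "k = ?m" using i k by simp_all
        then show ?thesis using ee by (simp add: nth_append)
      qed
    qed
    have e_in: "e \<in> lin_span (v # vs)" unfolding e_def by (rule subsp_scale[OF subsp_lin_span w_in])
    have sub1: "lin_span ?es \<subseteq> lin_span (v # vs)"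
      by (rule lin_span_mono) (use es_sub e_in in auto)
    have es_es: "set es \<subseteq> lin_span ?es" using in_lin_span by fastforce
    have e_es: "e \<in> lin_span ?es" using in_lin_span by fastforce
    have "v = (\<lambda>x. s * e x + (\<Sum>i<?m. inner p R (es ! i) v * (es ! i) x))"
      unfolding e_def w_def using s0 by (simp add: fun_eq_iff)
    also have "\<dots> \<in> lin_span ?es"
      by (intro subsp_add[OF subsp_lin_span] subsp_scale[OF subsp_lin_span] e_es
          subsp_sum[OF subsp_lin_span]) (use es_es in auto)
    finally have "v \<in> lin_span ?es" .
    moreover have "set vs \<subseteq> lin_span ?es"
      using es(2) lin_span_mono[OF es_es] in_lin_span by blast
    ultimately have sub2: "lin_span (v # vs) \<subseteq> lin_span ?es" by (intro lin_span_mono) auto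
    have "is_qvec p R e" using wq unfolding e_def is_qvec_def by simp
    then show ?thesis using on sub1 sub2 es(3) by (intro exI[where x = ?es]) auto
  qed
qed



locale LS =
  fixes p :: nat and R J :: "nat set" and C :: "fpvec set" and lam lamJ :: "kern \<Rightarrow> complex" and phi :: qvec
  assumes prime: "prime p" and finR: "finite R" and JR: "J \<subseteq> R"
    and dual: "C = symp_dual p R C"
    and chJ: "is_char p J (sigma J C) lamJ"
    and compat: "\<forall>z\<in>sigma J C. lamJ (pauli p J z) = lam (pauli p R z)"
    and phiQ: "phi \<in> qspace p R C lam"
    and norm1: "inner p R phi phi = 1"
begin

lemma p1: "p > 1" using prime prime_gt_1_nat by blast
lemma p0: "p > 0" using p1 by simp
lemma finJ: "finite J" using finR JR finite_subset by blast
lemma phiq: "is_qvec p R phi" using phiQ qspace_qvec by blast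

lemma C_fp: "C \<subseteq> fp_vecs p R"
  using dual unfolding symp_dual_def by blast

lemma eig: "y \<in> C \<Longrightarrow> x \<in> basis p R \<Longrightarrow>
    xi p (dot R (snd y) x) * phi x = lam (pauli p R y) * phi (sh p R x (fst y))"
  using eigen_iff[OF p0 finR phiq] qspace_pauli[OF phiQ] by blast

lemma mu_unit:
  assumes y: "y \<in> C"
  shows "cnj (lam (pauli p R y)) * lam (pauli p R y) = 1"
proof -
  let ?E = "kapply p R (pauli p R y) phi"
  let ?m = "lam (pauli p R y)"
  have E: "?E = (\<lambda>x. ?m * phi x)" using qspace_pauli[OF phiQ y] .
  have "inner p R ?E ?E = cnj ?m * ?m" unfolding E inner_scale_left inner_scale_right norm1 by simp
  moreover have "inner p R ?E ?E = 1"
  proof -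
    have "inner p R ?E ?E = (\<Sum>x\<in>basis p R. cnj (?E (sh p R x (fst y))) * ?E (sh p R x (fst y)))"
      unfolding inner_def using sum_sh[OF p0, of "\<lambda>x. cnj (?E x) * ?E x"] by simp
    also have "\<dots> = (\<Sum>x\<in>basis p R. cnj (phi x) * phi x)"
      using kapply_pauli_sh[OF p0 _ finR]
      by (intro sum.cong refl) (simp add: mult_ac)
    also have "\<dots> = 1" using norm1 unfolding inner_def .
    finally show ?thesis .
  qed
  ultimately show ?thesis by simp
qed

lemma inner_C: "y \<in> C \<Longrightarrow> inner p R phi (kapply p R (pauli p R y) phi) = lam (pauli p R y)"
  using qspace_pauli[OF phiQ] inner_scale_right norm1 by simp

lemma dot_comm: "dot R a b = dot R b a"
  unfolding dot_def by (simp add: mult.commute)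

lemma inner_notC:
  assumes z: "z \<in> fp_vecs p R" and nz: "z \<notin> C"
  shows "inner p R phi (kapply p R (pauli p R z) phi) = 0"
proof -
  obtain y' where y': "y' \<in> C" "symp p R z y' \<noteq> 0"
    using z nz dual unfolding symp_dual_def by blast
  define a where "a = fst z"
  define b where "b = snd z"
  define a' where "a' = fst y'"
  define b' where "b' = snd y'"
  define m where "m = lam (pauli p R y')"
  have mm: "m * cnj m = 1" using mu_unit[OF y'(1)] unfolding m_def by (simp add: mult.commute)
  have shphi: "phi (sh p R t a') = cnj m * xi p (dot R b' t) * phi t" if t: "t \<in> basis p R" for t
  proof -
    have "xi p (dot R b' t) * phi t = m * phi (sh p R t a')"
      using eig[OF y'(1) t] unfolding m_def a'_def b'_def .
    then have "cnj m * (xi p (dot R b' t) * phi t) = (cnj m * m) * phi (sh p R t a')" by simp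
    then show ?thesis using mm by (simp add: mult_ac)
  qed
  define I where "I = (\<Sum>x\<in>basis p R. cnj (phi (sh p R x a)) * xi p (dot R b x) * phi x)"
  have I: "inner p R phi (kapply p R (pauli p R z) phi) = I"
    unfolding I_def a_def b_def by (rule inner_pauli[OF p0 finR])
  define \<omega> where "\<omega> = cnj (xi p (dot R b' a)) * xi p (dot R b a')"
  have "I = (\<Sum>x\<in>basis p R. cnj (phi (sh p R (sh p R x a') a)) * xi p (dot R b (sh p R x a')) * phi (sh p R x a'))"
    unfolding I_def by (rule sum_sh[OF p0, symmetric])
  also have "\<dots> = (\<Sum>x\<in>basis p R. \<omega> * (cnj (phi (sh p R x a)) * xi p (dot R b x) * phi x))"
  proof (rule sum.cong[OF refl])
    fix x assume x: "x \<in> basis p R"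
    have sx: "sh p R x a \<in> basis p R" by (rule sh_in_basis[OF p0])
    have "cnj (phi (sh p R (sh p R x a') a)) * xi p (dot R b (sh p R x a')) * phi (sh p R x a')
        = cnj (cnj m * xi p (dot R b' (sh p R x a)) * phi (sh p R x a)) * (xi p (dot R b x) * xi p (dot R b a'))
          * (cnj m * xi p (dot R b' x) * phi x)"
      unfolding sh_comm[of p R x a' a] shphi[OF sx] shphi[OF x] xi_dot_sh[OF p0] ..
    also have "\<dots> = (m * cnj m) * (cnj (xi p (dot R b' x)) * xi p (dot R b' x)) * \<omega>
          * (cnj (phi (sh p R x a)) * xi p (dot R b x) * phi x)"
      unfolding xi_dot_sh[OF p0] \<omega>_def by (simp add: mult_ac)
    also have "\<dots> = \<omega> * (cnj (phi (sh p R x a)) * xi p (dot R b x) * phi x)"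
      using mm by simp
    finally show "cnj (phi (sh p R (sh p R x a') a)) * xi p (dot R b (sh p R x a')) * phi (sh p R x a')
        = \<omega> * (cnj (phi (sh p R x a)) * xi p (dot R b x) * phi x)" .
  qed
  also have "\<dots> = \<omega> * I" unfolding I_def by (simp add: sum_distrib_left)
  finally have II: "I = \<omega> * I" .
  have "\<omega> \<noteq> 1"
  proof
    assume "\<omega> = 1"
    then have "xi p (- dot R b' a + dot R b a') = 1" unfolding \<omega>_def xi_cnj xi_add by simp
    then have "(- dot R b' a + dot R b a') mod int p = 0" by (rule xi_eq_1[OF p0])
    then have "(dot R a b' - dot R b a') mod int p = 0"
      using dot_comm[of b' a] by (metis minus_diff_eq mod_minus_eq neg_equal_0_iff_equal uminus_add_conv_diff add.commute)
    moreover have "symp p R z y' = (dot R a b' - dot R b a') mod int p"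
      unfolding symp_def dot_def a_def b_def a'_def b'_def by (simp add: sum_subtractf)
    ultimately show False using y'(2) by simp
  qed
  with II have "I = 0" by (metis mult_cancel_right1)
  then show ?thesis using I by simp
qed

end


context LS
begin

abbreviation "K \<equiv> R - J"
abbreviation "sig \<equiv> sigma J C"
abbreviation "V \<equiv> qspace p J (sigma J C) lamJ"

definition rho where "rho = ptrace p R J (proj_vec phi)"

lemma rho_eq: "rho u' u = (if u' \<in> basis p J \<and> u \<in> basis p J then
   (\<Sum>w\<in>basis p K. phi (merge J u' w) * cnj (phi (merge J u w))) else 0)"
  unfolding rho_def ptrace_def proj_vec_def merge_def by simp

lemma rho_herm: "rho u' u = cnj (rho u u')"
  unfolding rho_eq by (simp add: mult.commute)

lemma sh_merge:
  assumes u: "u \<in> basis p J" and w: "w \<in> basis p K" and a: "a \<in> basis p J"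
  shows "sh p R (merge J u w) a = merge J (sh p J u a) w"
proof
  fix j
  show "sh p R (merge J u w) a j = merge J (sh p J u a) w j"
    using JR basis_out[OF a, of j] basis_out[OF w, of j] basis_mod[OF w, of j]
    unfolding sh_def merge_def by auto
qed

lemma dot_merge:
  assumes b: "b \<in> basis p J"
  shows "dot R b (merge J u w) = dot J b u"
proof -
  have "dot R b (merge J u w) = (\<Sum>j\<in>J. b j * merge J u w j)"
    unfolding dot_def
    by (rule sum.mono_neutral_right[OF finR JR]) (use basis_out[OF b] in auto)
  also have "\<dots> = dot J b u" unfolding dot_def merge_def by simp
  finally show ?thesis .
qed

lemma basis_JR: "x \<in> basis p J \<Longrightarrow> x \<in> basis p R"
proof -
  assume x: "x \<in> basis p J"
  have "0 \<le> x j \<and> x j < int p" if "j \<in> R" for j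
    using x p0 unfolding basis_def by (cases "j \<in> J") auto
  moreover have "x j = 0" if "j \<notin> R" for j
    using x JR that unfolding basis_def by blast
  ultimately show ?thesis unfolding basis_def by blast
qed

lemma basis_RJ: "x \<in> basis p R \<Longrightarrow> (\<forall>j. j \<notin> J \<longrightarrow> x j = 0) \<Longrightarrow> x \<in> basis p J"
  using JR unfolding basis_def by blast

lemma sig_fp: "sig \<subseteq> fp_vecs p J"
proof
  fix z assume "z \<in> sig"
  then have "z \<in> C" "\<forall>j. j \<notin> J \<longrightarrow> fst z j = 0 \<and> snd z j = 0" unfolding sigma_def by auto
  then show "z \<in> fp_vecs p J" using C_fp basis_RJ unfolding fp_vecs_basis by (cases z) auto
qed

lemma fpJ_R: "fp_vecs p J \<subseteq> fp_vecs p R"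
  unfolding fp_vecs_basis using basis_JR by auto

lemma notsig_notC: "z \<in> fp_vecs p J \<Longrightarrow> z \<notin> sig \<Longrightarrow> z \<notin> C"
  unfolding sigma_def fp_vecs_def by (cases z) auto

lemma fin_fpJ: "finite (fp_vecs p J)"
  unfolding fp_vecs_basis using finite_basis[OF finJ] by simp

lemma fin_sig: "finite sig" using finite_subset[OF sig_fp fin_fpJ] .

lemma zero_sig: "((\<lambda>_. 0), (\<lambda>_. 0)) \<in> sig"
proof -
  have "((\<lambda>_. 0), (\<lambda>_. 0)) \<in> symp_dual p R C"
    unfolding symp_dual_def fp_vecs_def symp_def using p0 by auto
  then show ?thesis using dual unfolding sigma_def by auto
qed

lemma trE_rho:
  assumes z: "z \<in> fp_vecs p J"
  shows "trE p J z rho = cnj (inner p R phi (kapply p R (pauli p R z) phi))"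
proof -
  obtain a b where ab: "z = (a, b)" "a \<in> basis p J" "b \<in> basis p J"
    using z unfolding fp_vecs_basis by auto
  have "cnj (inner p R phi (kapply p R (pauli p R z) phi))
      = (\<Sum>x\<in>basis p R. phi (sh p R x a) * cnj (xi p (dot R b x)) * cnj (phi x))"
    unfolding inner_pauli[OF p0 finR] ab by simp
  also have "\<dots> = (\<Sum>u\<in>basis p J. \<Sum>w\<in>basis p K. phi (sh p R (merge J u w) a) * cnj (xi p (dot R b (merge J u w))) * cnj (phi (merge J u w)))"
    by (rule sum_merge[OF JR])
  also have "\<dots> = (\<Sum>u\<in>basis p J. \<Sum>w\<in>basis p K. cnj (xi p (dot J b u)) * (phi (merge J (sh p J u a) w) * cnj (phi (merge J u w))))"
    using sh_merge[OF _ _ ab(2)] dot_merge[OF ab(3)] by (intro sum.cong refl) (simp add: mult_ac)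
  also have "\<dots> = trE p J z rho"
    unfolding trE_def ab rho_eq using sh_in_basis[OF p0] by (simp add: sum_distrib_left)
  finally show ?thesis by simp
qed

definition cc :: complex where "cc = of_nat (card sig) / of_nat p ^ card J"

lemma cc_nz: "cc \<noteq> 0"
  unfolding cc_def using zero_sig fin_sig p0 card_0_eq[OF fin_sig] by auto

lemma rho_V:
  assumes v: "v \<in> V"
  shows "kapply p J rho v = (\<lambda>x. cc * v x)"
proof
  fix u'
  let ?P = "of_nat p ^ card J :: complex"
  have rz: "rho u' u = 0" if "u' \<notin> basis p J \<or> u \<notin> basis p J" for u' u
    using that unfolding rho_eq by auto
  have "kapply p J rho v u' = (\<Sum>u\<in>basis p J. (\<Sum>z\<in>fp_vecs p J. trE p J z rho * pauli p J z u' u) / ?P * v u)"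
    unfolding kapply_def by (subst kexp[OF p1 finJ rz]) simp_all
  also have "\<dots> = (\<Sum>z\<in>fp_vecs p J. trE p J z rho * kapply p J (pauli p J z) v u') / ?P"
    unfolding kapply_def
    by (simp add: sum_divide_distrib sum_distrib_left sum_distrib_right mult_ac) (rule sum.swap)
  also have "\<dots> = (\<Sum>z\<in>fp_vecs p J. if z \<in> sig then v u' else 0) / ?P"
  proof -
    have "trE p J z rho * kapply p J (pauli p J z) v u' = (if z \<in> sig then v u' else 0)"
      if z: "z \<in> fp_vecs p J" for z
    proof (cases "z \<in> sig")
      case True
      then have zC: "z \<in> C" unfolding sigma_def by simp
      have "kapply p J (pauli p J z) v u' = lam (pauli p R z) * v u'"
        using qspace_pauli[OF v True] compat True by simp
      then show ?thesis using True trE_rho[OF z] inner_C[OF zC] mu_unit[OF zC] by simp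
    next
      case False
      then show ?thesis using trE_rho[OF z] inner_notC[OF subsetD[OF fpJ_R z] notsig_notC[OF z False]]
        by simp
    qed
    then show ?thesis by (intro arg_cong2[where f = divide] sum.cong refl) auto
  qed
  also have "\<dots> = of_nat (card sig) * v u' / ?P"
  proof -
    have "(\<Sum>z\<in>fp_vecs p J. if z \<in> sig then v u' else 0) = (\<Sum>z\<in>sig. v u')"
      using sum.inter_restrict[OF fin_fpJ, of "\<lambda>_. v u'" sig] sig_fp
      by (simp add: Int_absorb1 inf.commute)
    then show ?thesis by simp
  qed
  finally show "kapply p J rho v u' = cc * v u'" unfolding cc_def by simp
qed

end


lemma sum_set_nth: "distinct xs \<Longrightarrow> (\<Sum>x\<in>set xs. f x) = (\<Sum>i<length xs. f (xs ! i))"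
  by (simp add: sum_list_distinct_conv_sum_set[symmetric] sum_list_sum_nth atLeast0LessThan)

context LS
begin

lemma phiw_V:
  assumes w: "w \<in> basis p K"
  shows "(\<lambda>u. if u \<in> basis p J then phi (merge J u w) else 0) \<in> V"
  (is "?f \<in> V")
proof (rule qspace_gen[OF finJ p0 chJ])
  show q: "is_qvec p J ?f" unfolding is_qvec_def by simp
  fix z assume z: "z \<in> sig"
  obtain a b where ab: "z = (a, b)" "a \<in> basis p J" "b \<in> basis p J"
    using sig_fp z unfolding fp_vecs_basis by auto
  have zC: "z \<in> C" using z unfolding sigma_def by simp
  show "kapply p J (pauli p J z) ?f = (\<lambda>x. lamJ (pauli p J z) * ?f x)"
    unfolding eigen_iff[OF p0 finJ q]
  proof
    fix u assume u: "u \<in> basis p J"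
    have x: "merge J u w \<in> basis p R" by (rule merge_in_basis[OF JR u w])
    have "xi p (dot R b (merge J u w)) * phi (merge J u w) = lam (pauli p R z) * phi (sh p R (merge J u w) a)"
      using eig[OF zC x] ab by simp
    then show "xi p (dot J (snd z) u) * ?f u = lamJ (pauli p J z) * ?f (sh p J u (fst z))"
      using dot_merge[OF ab(3)] sh_merge[OF u w ab(2)] compat z u ab sh_in_basis[OF p0] by simp
  qed
qed

lemma col_V: "(\<lambda>u'. rho u' x) \<in> V"
proof (cases "x \<in> basis p J")
  case True
  have "(\<lambda>u'. rho u' x) = (\<lambda>u'. \<Sum>w\<in>basis p K. cnj (phi (merge J x w)) *
          (\<lambda>w u. if u \<in> basis p J then phi (merge J u w) else 0) w u')"
    unfolding rho_eq using True by (auto simp: fun_eq_iff mult.commute)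
  also have "\<dots> \<in> V"
    by (rule qspace_lincomb[OF finite_basis[OF finite_Diff[OF finR]]]) (rule phiw_V)
  finally show ?thesis .
next
  case False
  have "(\<lambda>u'. rho u' x) = (\<lambda>u'. 0)"
    unfolding rho_eq using False by simp
  also have "\<dots> \<in> V" unfolding qspace_def is_qvec_def kapply_def by simp
  finally show ?thesis .
qed

lemma final: "completely_mixed p J rho V"
proof -
  obtain xs where xs: "distinct xs" "set xs = basis p J"
    using finite_distinct_list[OF finite_basis[OF finJ]] by metis
  define cols where "cols = map (\<lambda>x u'. rho u' x) xs"
  have colsV: "set cols \<subseteq> V" unfolding cols_def using col_V by auto
  have span: "lin_span cols = V"
  proof
    show "lin_span cols \<subseteq> V" by (rule lin_span_qspace[OF colsV])
    show "V \<subseteq> lin_span cols"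
    proof
      fix v assume v: "v \<in> V"
      have "v = (\<lambda>u'. \<Sum>i<length cols. (v (xs ! i) / cc) * (cols ! i) u')"
      proof
        fix u'
        have "v u' = (1 / cc) * kapply p J rho v u'" using rho_V[OF v] cc_nz by simp
        also have "\<dots> = (\<Sum>x\<in>set xs. (v x / cc) * rho u' x)"
          unfolding kapply_def xs(2) by (simp add: sum_distrib_left mult_ac)
        also have "\<dots> = (\<Sum>i<length cols. (v (xs ! i) / cc) * (cols ! i) u')"
          unfolding sum_set_nth[OF xs(1)] cols_def by simp
        finally show "v u' = (\<Sum>i<length cols. (v (xs ! i) / cc) * (cols ! i) u')" .
      qed
      then show "v \<in> lin_span cols" unfolding lin_span_def by (auto intro!: exI[where x = "\<lambda>i. v (xs ! i) / cc"])
    qed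
  qed
  have "\<forall>v\<in>set cols. is_qvec p J v" using colsV qspace_qvec by blast
  then obtain es where es: "orthonormal p J es" "lin_span es = lin_span cols" "\<forall>e\<in>set es. is_qvec p J e"
    using gram_schmidt[OF finJ] by blast
  have esV: "lin_span es = V" using es(2) span by simp
  let ?k = "length es"
  have on: "inner p J (es ! i) (es ! l) = (if i = l then 1 else 0)" if "i < ?k" "l < ?k" for i l
    using es(1) that unfolding orthonormal_def by blast
  have esq: "(es ! i) x = 0" if "i < ?k" "x \<notin> basis p J" for i x
    using es(3) nth_mem[OF that(1)] that(2) unfolding is_qvec_def by blast
  have decomp: "rho u' u = cc * (\<Sum>i<?k. (es ! i) u' * cnj ((es ! i) u))" for u' u
  proof (cases "u' \<in> basis p J \<and> u \<in> basis p J")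
    case False
    then have "rho u' u = 0" unfolding rho_eq by auto
    moreover have "(\<Sum>i<?k. (es ! i) u' * cnj ((es ! i) u)) = 0"
      using False esq by (intro sum.neutral) auto
    ultimately show ?thesis by simp
  next
    case True
    then have u: "u \<in> basis p J" and u': "u' \<in> basis p J" by auto
    define \<delta> where "\<delta> = (\<lambda>x. if x = u then (1::complex) else 0)"
    define \<pi> where "\<pi> = (\<lambda>x. \<Sum>i<?k. cnj ((es ! i) u) * (es ! i) x)"
    define r where "r = (\<lambda>x. \<delta> x - \<pi> x)"
    have piV: "\<pi> \<in> V" unfolding esV[symmetric] lin_span_def \<pi>_def
      by (auto intro!: exI[where x = "\<lambda>i. cnj ((es ! i) u)"])
    have ied: "inner p J (es ! i) \<delta> = cnj ((es ! i) u)" for i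
    proof -
      have "inner p J (es ! i) \<delta> = (\<Sum>x\<in>basis p J. if x = u then cnj ((es ! i) u) else 0)"
        unfolding inner_def \<delta>_def by (intro sum.cong) auto
      also have "\<dots> = cnj ((es ! i) u)" using u finite_basis[OF finJ] by simp
      finally show ?thesis .
    qed
    have r_orth: "inner p J (es ! i) r = 0" if i: "i < ?k" for i
    proof -
      have "inner p J (es ! i) r = cnj ((es ! i) u) - (\<Sum>l<?k. cnj ((es ! l) u) * inner p J (es ! i) (es ! l))"
        unfolding r_def inner_diff_right ied \<pi>_def inner_sum_right ..
      also have "(\<Sum>l<?k. cnj ((es ! l) u) * inner p J (es ! i) (es ! l)) = (\<Sum>l<?k. if l = i then cnj ((es ! i) u) else 0)"
        using on[OF i] by (intro sum.cong) auto
      also have "\<dots> = cnj ((es ! i) u)" using i by simp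
      finally show ?thesis by simp
    qed
    have r_perp: "inner p J w r = 0" if w: "w \<in> V" for w
    proof -
      obtain c where c: "w = (\<lambda>x. \<Sum>i<?k. c i * (es ! i) x)"
        using w unfolding esV[symmetric] lin_span_def by blast
      show ?thesis unfolding c inner_sum_left using r_orth by simp
    qed
    have "rho u' u = kapply p J rho \<delta> u'"
    proof -
      have "kapply p J rho \<delta> u' = (\<Sum>x\<in>basis p J. if x = u then rho u' u else 0)"
        unfolding kapply_def \<delta>_def by (intro sum.cong) auto
      then show ?thesis using u finite_basis[OF finJ] by simp
    qed
    also have "\<dots> = kapply p J rho \<pi> u' + kapply p J rho r u'"
      unfolding kapply_def r_def by (simp add: sum.distrib[symmetric] algebra_simps)
    also have "kapply p J rho \<pi> u' = cc * \<pi> u'" using rho_V[OF piV] by simp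
    also have "kapply p J rho r u' = inner p J (\<lambda>x. rho x u') r"
      unfolding kapply_def inner_def by (metis rho_herm)
    also have "\<dots> = 0" by (rule r_perp[OF col_V])
    finally show ?thesis unfolding \<pi>_def by (simp add: mult.commute)
  qed
  have tr1: "(\<Sum>u\<in>basis p J. rho u u) = 1"
  proof -
    have "(\<Sum>u\<in>basis p J. rho u u) = (\<Sum>u\<in>basis p J. \<Sum>w\<in>basis p K. phi (merge J u w) * cnj (phi (merge J u w)))"
      unfolding rho_eq by simp
    also have "\<dots> = (\<Sum>x\<in>basis p R. phi x * cnj (phi x))"
      by (rule sum_merge[OF JR, symmetric])
    also have "\<dots> = inner p R phi phi" unfolding inner_def by (simp add: mult.commute)
    finally show ?thesis using norm1 by simp
  qed
  have tr2: "(\<Sum>u\<in>basis p J. \<Sum>i<?k. (es ! i) u * cnj ((es ! i) u)) = of_nat ?k"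
  proof -
    have "(\<Sum>u\<in>basis p J. \<Sum>i<?k. (es ! i) u * cnj ((es ! i) u)) = (\<Sum>i<?k. inner p J (es ! i) (es ! i))"
      unfolding inner_def by (subst sum.swap) (simp add: mult.commute)
    also have "\<dots> = (\<Sum>i<?k. 1)" using on by simp
    finally show ?thesis by simp
  qed
  have "(1::complex) = (\<Sum>u\<in>basis p J. cc * (\<Sum>i<?k. (es ! i) u * cnj ((es ! i) u)))"
    using tr1 decomp by simp
  also have "\<dots> = cc * of_nat ?k" using tr2 by (simp only: sum_distrib_left[symmetric])
  finally have "(1::complex) = cc * of_nat ?k" .
  then have k0: "?k \<noteq> 0" by auto
  with \<open>(1::complex) = cc * of_nat ?k\<close> have cck: "cc = 1 / of_nat ?k"
    by (simp add: eq_divide_eq)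
  show ?thesis unfolding completely_mixed_def is_onb_def
  proof (intro exI conjI)
    show "es \<noteq> []" using k0 by simp
    show "\<forall>i<?k. \<forall>l<?k. inner p J (es ! i) (es ! l) = (if i = l then 1 else 0)" using on by blast
    show "lin_span es = V" by (rule esV)
    show "rho = (\<lambda>x' x. (\<Sum>i<?k. (es ! i) x' * cnj ((es ! i) x)) / of_nat ?k)"
      using decomp cck by (auto simp: fun_eq_iff)
  qed
qed

end

theorem lemma15:
  fixes p n :: nat and C :: "fpvec set" and J :: "nat set"
    and lam lamJ :: "kern \<Rightarrow> complex" and phi :: qvec
  assumes "prime p"
    and "is_code p {1..n} C"
    and "C = symp_dual p {1..n} C"
    and "J \<noteq> {}" and "J \<subset> {1..n}"
    and "is_char p {1..n} C lam"
    and "is_char p J (sigma J C) lamJ"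
    and "\<forall>z\<in>sigma J C. lamJ (pauli p J z) = lam (pauli p {1..n} z)"
    and "phi \<in> qspace p {1..n} C lam"
    and "inner p {1..n} phi phi = 1"
  shows "completely_mixed p J (ptrace p {1..n} J (proj_vec phi)) (qspace p J (sigma J C) lamJ)"
proof -
  interpret L: LS p "{1..n}" J C lam lamJ phi
    by unfold_locales (use assms in auto)
  show ?thesis using L.final unfolding L.rho_def .
qed


end
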